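(* Let $0\le\mu<L<+\infty$, $N\ge1$, $R>0$, let $H=\{h_{i,k}\}$ define a fixed-step method with $N$ steps such that $h_{i,i-1}\neq0$ for all $i\in\{1,\dots,N\}$, and let $b\in\mathbb{R}^{N+1}$, $C\in\mathbb{S}^{N+2}$. Then the optimal value of the dual problem $$\inf_{\{\lambda_{ij}\}_{i,j\in I},\ \tau}\ \tau R^2\quad\text{s.t.}\quad \tau A_R-C+\sum_{i,j\in I}\lambda_{ij}A_{ij}\succeq0,\quad b-\sum_{i,j\in I}\lambda_{ij}(v_j-v_i)=0,\quad \lambda_{ij}\ge0\ (i,j\in I),\quad \tau\ge0$$ is attained and equal to $w^{sdp}_{\mu,L}(R,H,N,b,C)$.
   Context: Fixed-step method with $N$ steps: scalars $h_{i,k}$ for $1\le i\le N$, $0\le k\le N-1$, with $h_{i,k}=0$ for $k\ge i$ (a lower-triangular $H\in\mathbb{R}^{N\times N}$); iterates are $x_i=x_0-\sum_{k=0}^{i-1}h_{i,k}g_k$ with $g_k$ the gradient at $x_k$. Let $I=\{0,1,\dots,N,*\}$ and $e_1,\dots,e_{N+2}$ the standard basis of $\mathbb{R}^{N+2}$. For $i=0,\dots,N$ let $h_i=(-h_{i,0},\dots,-h_{i,i-1},0,\dots,0,1)^{\top}\in\mathbb{R}^{N+2}$ (last entry $1$) and $u_i=e_{i+1}$; let $h_*=u_*=0$. For $i,j\in I$ define the symmetric matrix $A_{ij}$ by $2A_{ij}=\frac{L}{L-\mu}\big(u_j(h_i-h_j)^{\top}+(h_i-h_j)u_j^{\top}\big)+\frac{1}{L-\mu}(u_i-u_j)(u_i-u_j)^{\top}+\frac{\mu}{L-\mu}\big(u_i(h_j-h_i)^{\top}+(h_j-h_i)u_i^{\top}\big)+\frac{L\mu}{L-\mu}(h_i-h_j)(h_i-h_j)^{\top}$,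 and $A_R=e_{N+2}e_{N+2}^{\top}$. For the function-value variables, let $v_i$ be the $(i+1)$-th standard basis vector of $\mathbb{R}^{N+1}$ for $i=0,\dots,N$ and $v_*=0$. The primal value $w^{sdp}_{\mu,L}(R,H,N,b,C)$ is the supremum of $b^{\top}f+\mathrm{Tr}(CG)$ over $G\in\mathbb{S}^{N+2}$ (symmetric matrices), $f=(f_0,\dots,f_N)\in\mathbb{R}^{N+1}$ subject to $f_j-f_i+\mathrm{Tr}(GA_{ij})\le0$ for all $i,j\in I$ (with $f_*:=0$), $\mathrm{Tr}(GA_R)\le R^2$, and $G\succeq0$. *)

theory Defs
  imports "HOL-Analysis.Analysis"
begin

(* Matrices of size n x n are represented as functions nat => nat => real,
   with only the entries with indices < n relevant (0-based indexing).
   Vectors of length n are functions nat => real (indices < n). *)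

definition sym_mat :: "nat \<Rightarrow> (nat \<Rightarrow> nat \<Rightarrow> real) \<Rightarrow> bool" where
  "sym_mat n M \<longleftrightarrow> (\<forall>i<n. \<forall>j<n. M i j = M j i)"

definition psd :: "nat \<Rightarrow> (nat \<Rightarrow> nat \<Rightarrow> real) \<Rightarrow> bool" where
  "psd n M \<longleftrightarrow> sym_mat n M \<and>
     (\<forall>x :: nat \<Rightarrow> real. 0 \<le> (\<Sum>i<n. \<Sum>j<n. x i * M i j * x j))"

definition trace_prod :: "nat \<Rightarrow> (nat \<Rightarrow> nat \<Rightarrow> real) \<Rightarrow> (nat \<Rightarrow> nat \<Rightarrow> real) \<Rightarrow> real" where
  "trace_prod n M P = (\<Sum>k<n. \<Sum>l<n. M k l * P l k)"

definition outer :: "(nat \<Rightarrow> real) \<Rightarrow> (nat \<Rightarrow> real) \<Rightarrow> nat \<Rightarrow> nat \<Rightarrow> real" where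
  "outer x y = (\<lambda>k l. x k * y l)"

(* Index set I = {0,...,N,*}: Some i stands for i (0 <= i <= N), None stands for *. *)
definition idx :: "nat \<Rightarrow> nat option set" where
  "idx N = insert None (Some ` {0..N})"

(* Vectors in R^(N+2), 0-based: e_m (1-based, paper) is position m-1.
   h_i = (-h_{i,0},...,-h_{i,i-1},0,...,0,1), last entry at position N+1; h_* = 0. *)
definition hvec :: "nat \<Rightarrow> (nat \<Rightarrow> nat \<Rightarrow> real) \<Rightarrow> nat option \<Rightarrow> nat \<Rightarrow> real" where
  "hvec N h i = (case i of None \<Rightarrow> (\<lambda>_. 0)
     | Some i \<Rightarrow> (\<lambda>k. if k < i then - h i k else if k = N + 1 then 1 else 0))"

(* u_i = e_{i+1}, i.e. position i (0-based); u_* = 0 *)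
definition uvec :: "nat option \<Rightarrow> nat \<Rightarrow> real" where
  "uvec i = (case i of None \<Rightarrow> (\<lambda>_. 0) | Some i \<Rightarrow> (\<lambda>k. if k = i then 1 else 0))"

(* the matrix A_ij (2 A_ij is given by the formula of the paper) *)
definition Amat :: "real \<Rightarrow> real \<Rightarrow> nat \<Rightarrow> (nat \<Rightarrow> nat \<Rightarrow> real)
                    \<Rightarrow> nat option \<Rightarrow> nat option \<Rightarrow> nat \<Rightarrow> nat \<Rightarrow> real" where
  "Amat mu L N h i j = (\<lambda>k l.
     (let hi = hvec N h i; hj = hvec N h j; ui = uvec i; uj = uvec j;
          dh = (\<lambda>m. hi m - hj m); mdh = (\<lambda>m. hj m - hi m); du = (\<lambda>m. ui m - uj m) in
      (L / (L - mu) * (outer uj dh k l + outer dh uj k l)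
       + 1 / (L - mu) * outer du du k l
       + mu / (L - mu) * (outer ui mdh k l + outer mdh ui k l)
       + L * mu / (L - mu) * outer dh dh k l) / 2))"

definition ARmat :: "nat \<Rightarrow> nat \<Rightarrow> nat \<Rightarrow> real" where
  "ARmat N = (\<lambda>k l. if k = N + 1 \<and> l = N + 1 then 1 else 0)"

definition fval :: "(nat \<Rightarrow> real) \<Rightarrow> nat option \<Rightarrow> real" where
  "fval f i = (case i of None \<Rightarrow> 0 | Some i \<Rightarrow> f i)"

(* v_i = (i+1)-th standard basis vector of R^(N+1) (position i, 0-based), v_* = 0 *)
definition vvec :: "nat option \<Rightarrow> nat \<Rightarrow> real" where
  "vvec i = uvec i"

definition primal_feasible :: "real \<Rightarrow> real \<Rightarrow> real \<Rightarrow> nat \<Rightarrow> (nat \<Rightarrow> nat \<Rightarrow> real)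
     \<Rightarrow> (nat \<Rightarrow> nat \<Rightarrow> real) \<Rightarrow> (nat \<Rightarrow> real) \<Rightarrow> bool" where
  "primal_feasible mu L R N h G f \<longleftrightarrow>
     psd (N + 2) G \<and>
     (\<forall>i\<in>idx N. \<forall>j\<in>idx N. fval f j - fval f i + trace_prod (N + 2) G (Amat mu L N h i j) \<le> 0) \<and>
     trace_prod (N + 2) G (ARmat N) \<le> R\<^sup>2"

definition primal_obj :: "nat \<Rightarrow> (nat \<Rightarrow> real) \<Rightarrow> (nat \<Rightarrow> nat \<Rightarrow> real)
     \<Rightarrow> (nat \<Rightarrow> nat \<Rightarrow> real) \<Rightarrow> (nat \<Rightarrow> real) \<Rightarrow> real" where
  "primal_obj N b C G f = (\<Sum>i\<le>N. b i * f i) + trace_prod (N + 2) C G"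

definition w_sdp :: "real \<Rightarrow> real \<Rightarrow> real \<Rightarrow> (nat \<Rightarrow> nat \<Rightarrow> real) \<Rightarrow> nat
     \<Rightarrow> (nat \<Rightarrow> real) \<Rightarrow> (nat \<Rightarrow> nat \<Rightarrow> real) \<Rightarrow> ereal" where
  "w_sdp mu L R h N b C =
     (SUP p \<in> {(G, f). primal_feasible mu L R N h G f}. ereal (primal_obj N b C (fst p) (snd p)))"

definition dual_feasible :: "real \<Rightarrow> real \<Rightarrow> nat \<Rightarrow> (nat \<Rightarrow> nat \<Rightarrow> real)
     \<Rightarrow> (nat \<Rightarrow> real) \<Rightarrow> (nat \<Rightarrow> nat \<Rightarrow> real)
     \<Rightarrow> (nat option \<Rightarrow> nat option \<Rightarrow> real) \<Rightarrow> real \<Rightarrow> bool" where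
  "dual_feasible mu L N h b C lam tau \<longleftrightarrow>
     psd (N + 2) (\<lambda>k l. tau * ARmat N k l - C k l
        + (\<Sum>i\<in>idx N. \<Sum>j\<in>idx N. lam i j * Amat mu L N h i j k l)) \<and>
     (\<forall>m\<le>N. b m - (\<Sum>i\<in>idx N. \<Sum>j\<in>idx N. lam i j * (vvec j m - vvec i m)) = 0) \<and>
     (\<forall>i\<in>idx N. \<forall>j\<in>idx N. lam i j \<ge> 0) \<and>
     tau \<ge> 0"

end

theory Submission
  imports Defs "HOL-Computational_Algebra.Polynomial"
begin

definition Bf :: "nat \<Rightarrow> (nat\<Rightarrow>nat\<Rightarrow>real) \<Rightarrow> (nat\<Rightarrow>real) \<Rightarrow> (nat\<Rightarrow>real) \<Rightarrow> real" where
  "Bf n G x y = (\<Sum>k<n. \<Sum>l<n. x k * G k l * y l)"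

lemma tr_add: "trace_prod n G (\<lambda>k l. P k l + Q k l) = trace_prod n G P + trace_prod n G Q"
  by (simp add: trace_prod_def algebra_simps sum.distrib)
lemma tr_diff: "trace_prod n G (\<lambda>k l. P k l - Q k l) = trace_prod n G P - trace_prod n G Q"
  by (simp add: trace_prod_def algebra_simps sum_subtractf)
lemma tr_cmult: "trace_prod n G (\<lambda>k l. c * P k l) = c * trace_prod n G P"
  by (simp add: trace_prod_def algebra_simps sum_distrib_left)
lemma tr_div: "trace_prod n G (\<lambda>k l. P k l / c) = trace_prod n G P / c"
  by (simp add: trace_prod_def sum_divide_distrib)
lemma tr_outer: "trace_prod n G (outer x y) = Bf n G y x"
  by (simp add: trace_prod_def Bf_def outer_def mult_ac)
lemma tr_outer': "trace_prod n G (\<lambda>k l. outer x y k l) = Bf n G y x"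
  by (rule tr_outer)

lemma Bf_diff1: "Bf n G (\<lambda>m. x m - y m) z = Bf n G x z - Bf n G y z"
  by (simp add: Bf_def algebra_simps sum_subtractf)
lemma Bf_diff2: "Bf n G z (\<lambda>m. x m - y m) = Bf n G z x - Bf n G z y"
  by (simp add: Bf_def algebra_simps sum_subtractf)
lemma Bf_add1: "Bf n G (\<lambda>m. x m + y m) z = Bf n G x z + Bf n G y z"
  by (simp add: Bf_def algebra_simps sum.distrib)
lemma Bf_add2: "Bf n G z (\<lambda>m. x m + y m) = Bf n G z x + Bf n G z y"
  by (simp add: Bf_def algebra_simps sum.distrib)
lemma Bf_cmult1: "Bf n G (\<lambda>m. c * x m) z = c * Bf n G x z"
  by (simp add: Bf_def algebra_simps sum_distrib_left)
lemma Bf_cmult2: "Bf n G z (\<lambda>m. c * x m) = c * Bf n G z x"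
  by (simp add: Bf_def algebra_simps sum_distrib_left)
lemma Bf_zero1[simp]: "Bf n G (\<lambda>m. 0) z = 0" by (simp add: Bf_def)
lemma Bf_zero2[simp]: "Bf n G z (\<lambda>m. 0) = 0" by (simp add: Bf_def)
lemma Bf_sym: "sym_mat n G \<Longrightarrow> Bf n G x y = Bf n G y x"
  unfolding Bf_def sym_mat_def
  by (subst sum.swap) (auto intro!: sum.cong simp: mult_ac)

lemma aux_div: "((L::real) / d * X + 1 / d * Y + mu / d * Z + L * mu / d * W) / 2 = (L*X+Y+mu*Z+L*mu*W)/(2*d)"
  by (cases "d = 0") (simp_all add: field_simps)

lemma tr_Amat: "trace_prod n G (Amat mu L N h i j) =
   (let hi = hvec N h i; hj = hvec N h j; ui = uvec i; uj = uvec j in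
   (L * (Bf n G hi uj - Bf n G hj uj + Bf n G uj hi - Bf n G uj hj)
    + (Bf n G ui ui - Bf n G ui uj - Bf n G uj ui + Bf n G uj uj)
    + mu * (Bf n G hj ui - Bf n G hi ui + Bf n G ui hj - Bf n G ui hi)
    + L * mu * (Bf n G hi hi - Bf n G hi hj - Bf n G hj hi + Bf n G hj hj)) / (2 * (L - mu)))"
  unfolding Amat_def Let_def
  apply (subst tr_div)
  apply (subst tr_add)+
  apply (subst tr_cmult)+
  apply (subst tr_add)+
  apply (simp only: tr_outer Bf_diff1 Bf_diff2)
  apply (subst aux_div)
  apply (simp add: algebra_simps)
  done

definition affine_on :: "'a set \<Rightarrow> (real \<Rightarrow> 'a \<Rightarrow> 'a \<Rightarrow> 'a) \<Rightarrow> ('a \<Rightarrow> real) \<Rightarrow> bool" where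
  "affine_on X mix \<phi> \<longleftrightarrow> (\<forall>x\<in>X. \<forall>y\<in>X. \<forall>t. 0 \<le> t \<and> t \<le> 1 \<longrightarrow> \<phi> (mix t x y) = t * \<phi> x + (1 - t) * \<phi> y)"

definition mix_closed :: "'a set \<Rightarrow> (real \<Rightarrow> 'a \<Rightarrow> 'a \<Rightarrow> 'a) \<Rightarrow> bool" where
  "mix_closed X mix \<longleftrightarrow> (\<forall>x\<in>X. \<forall>y\<in>X. \<forall>t. 0 \<le> t \<and> t \<le> 1 \<longrightarrow> mix t x y \<in> X)"

lemma lagr1:
  assumes mc: "mix_closed X mix" and aF: "affine_on X mix F" and ag: "affine_on X mix g"
    and x0: "x0 \<in> X" "g x0 < 0" and bd: "\<forall>x\<in>X. g x \<le> 0 \<longrightarrow> F x \<le> p"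
  shows "\<exists>l\<ge>0. \<forall>x\<in>X. F x - l * g x \<le> p"
proof -
  have key: "(F x - p) / g x \<le> (p - F y) / (- g y)"
    if xy: "x \<in> X" "y \<in> X" "g x > 0" "g y < 0" for x y
  proof -
    define a where "a = g x"
    define b where "b = - g y"
    have a: "a > 0" and b: "b > 0" using xy by (auto simp: a_def b_def)
    define t where "t = b / (a + b)"
    have t01: "0 \<le> t" "t \<le> 1" using a b by (auto simp: t_def field_simps)
    have 1: "1 - t = a / (a + b)" using a b by (simp add: t_def field_simps)
    have "g (mix t x y) = t * g x + (1 - t) * g y"
      using ag xy t01 unfolding affine_on_def by blast
    also have "\<dots> = t * a + (1 - t) * (- b)" by (simp add: a_def b_def)
    also have "\<dots> = 0" unfolding 1 t_def using a b by (simp add: field_simps)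
    finally have "F (mix t x y) \<le> p" using bd mc xy t01 unfolding mix_closed_def by auto
    moreover have "F (mix t x y) = t * F x + (1 - t) * F y"
      using aF xy t01 unfolding affine_on_def by blast
    ultimately have "t * F x + (1 - t) * F y \<le> p" by simp
    moreover have "t * F x + (1 - t) * F y = (b * F x + a * F y) / (a + b)"
      unfolding 1 unfolding t_def by (simp add: add_divide_distrib)
    ultimately have "(b * F x + a * F y) / (a + b) \<le> p" by simp
    hence "b * F x + a * F y \<le> p * (a + b)" using a b by (simp add: divide_le_eq)
    hence "b * (F x - p) \<le> a * (p - F y)" by (simp add: algebra_simps)
    hence "(F x - p) / a \<le> (p - F y) / b" using a b by (simp add: divide_simps mult.commute)
    thus ?thesis by (simp add: a_def b_def)
  qed
  define S where "S = {(F x - p) / g x | x. x \<in> X \<and> g x > 0}"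
  show ?thesis
  proof (cases "S = {}")
    case True
    show ?thesis
    proof (intro exI[of _ 0] conjI ballI)
      fix x assume x: "x \<in> X"
      have "\<not> g x > 0" using True x unfolding S_def by auto
      thus "F x - 0 * g x \<le> p" using bd x by auto
    qed simp
  next
    case False
    have bdd: "bdd_above S" unfolding S_def
      by (rule bdd_aboveI[where M="(p - F x0) / (- g x0)"]) (use key x0 in auto)
    define l where "l = max 0 (Sup S)"
    show ?thesis
    proof (intro exI[of _ l] conjI ballI)
      show "0 \<le> l" by (simp add: l_def)
      fix x assume x: "x \<in> X"
      consider "g x > 0" | "g x = 0" | "g x < 0" by linarith
      then show "F x - l * g x \<le> p"
      proof cases
        case 1
        have "(F x - p) / g x \<in> S" using x 1 unfolding S_def by auto
        hence "(F x - p) / g x \<le> l" using bdd unfolding l_def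
          by (meson cSup_upper max.coboundedI2)
        thus ?thesis using 1 by (simp add: divide_le_eq algebra_simps)
      next
        case 2 thus ?thesis using bd x by auto
      next
        case 3
        have "Sup S \<le> (p - F x) / (- g x)"
          by (rule cSup_least) (use False key x 3 in \<open>auto simp: S_def\<close>)
        moreover have "0 \<le> (p - F x) / (- g x)" using bd x 3 by (intro divide_nonneg_pos) auto
        ultimately have "l \<le> (p - F x) / (- g x)" by (simp add: l_def)
        hence "l * (- g x) \<le> (p - F x) / (- g x) * (- g x)"
          using 3 by (intro mult_right_mono) auto
        also have "\<dots> = p - F x" using 3 by simp
        finally show ?thesis by (simp add: algebra_simps)
      qed
    qed
  qed
qed

lemma affine_on_sub_sum:
  assumes "affine_on X mix F" "\<forall>k\<in>K. affine_on X mix (g k)"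
  shows "affine_on X mix (\<lambda>x. F x - (\<Sum>k\<in>K. l k * g k x))"
  unfolding affine_on_def
proof (intro ballI allI impI)
  fix x y and t :: real assume xy: "x \<in> X" "y \<in> X" and t: "0 \<le> t \<and> t \<le> 1"
  have "(\<Sum>k\<in>K. l k * g k (mix t x y)) = (\<Sum>k\<in>K. t * (l k * g k x) + (1 - t) * (l k * g k y))"
  proof (intro sum.cong refl)
    fix k assume "k \<in> K"
    then have eqk: "g k (mix t x y) = t * g k x + (1 - t) * g k y"
      using assms(2) xy t unfolding affine_on_def by blast
    show "l k * g k (mix t x y) = t * (l k * g k x) + (1 - t) * (l k * g k y)"
      unfolding eqk by (simp add: algebra_simps)
  qed
  also have "\<dots> = t * (\<Sum>k\<in>K. l k * g k x) + (1 - t) * (\<Sum>k\<in>K. l k * g k y)"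
    by (simp add: sum.distrib sum_distrib_left)
  finally show "F (mix t x y) - (\<Sum>k\<in>K. l k * g k (mix t x y)) =
      t * (F x - (\<Sum>k\<in>K. l k * g k x)) + (1 - t) * (F y - (\<Sum>k\<in>K. l k * g k y))"
    using assms(1) xy t unfolding affine_on_def by (simp add: algebra_simps)
qed

lemma lagr_fin:
  assumes "finite K" "mix_closed X mix" "affine_on X mix F" "\<forall>k\<in>K. affine_on X mix (g k)"
    "x0 \<in> X" "\<forall>k\<in>K. g k x0 < 0" "\<forall>x\<in>X. (\<forall>k\<in>K. g k x \<le> 0) \<longrightarrow> F x \<le> p"
  shows "\<exists>l. (\<forall>k\<in>K. 0 \<le> l k) \<and> (\<forall>x\<in>X. F x - (\<Sum>k\<in>K. l k * g k x) \<le> p)"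
  using assms
proof (induction K arbitrary: X F rule: finite_induct)
  case empty
  then show ?case by auto
next
  case (insert a K)
  define X' where "X' = {x\<in>X. g a x \<le> 0}"
  have mc': "mix_closed X' mix"
    using insert.prems(1,3) unfolding mix_closed_def X'_def affine_on_def
  proof (intro ballI allI impI)
    fix x y and t :: real assume xy: "x \<in> {x\<in>X. g a x \<le> 0}" "y \<in> {x\<in>X. g a x \<le> 0}" and t: "0 \<le> t \<and> t \<le> 1"
    have "g a (mix t x y) = t * g a x + (1 - t) * g a y"
      using insert.prems(3) xy t unfolding affine_on_def by auto
    also have "\<dots> \<le> 0" using xy t by (intro add_nonpos_nonpos mult_nonneg_nonpos) auto
    finally show "mix t x y \<in> {x\<in>X. g a x \<le> 0}"
      using insert.prems(1) xy t unfolding mix_closed_def by auto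
  qed
  have sub: "\<And>\<phi>. affine_on X mix \<phi> \<Longrightarrow> affine_on X' mix \<phi>"
    unfolding affine_on_def X'_def by auto
  obtain l where l: "\<forall>k\<in>K. 0 \<le> l k" "\<forall>x\<in>X'. F x - (\<Sum>k\<in>K. l k * g k x) \<le> p"
    using insert.IH[OF mc' sub[OF insert.prems(2)]] insert.prems sub
    unfolding X'_def by auto
  have aF': "affine_on X mix (\<lambda>x. F x - (\<Sum>k\<in>K. l k * g k x))"
    using affine_on_sub_sum insert.prems by auto
  obtain m where m: "m \<ge> 0" "\<forall>x\<in>X. (F x - (\<Sum>k\<in>K. l k * g k x)) - m * g a x \<le> p"
    using lagr1[OF insert.prems(1) aF', of "g a" x0 p] insert.prems l(2) unfolding X'_def by auto
  have eq: "(\<Sum>k\<in>insert a K. (l(a := m)) k * g k x) = m * g a x + (\<Sum>k\<in>K. l k * g k x)" for x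
  proof -
    have "(\<Sum>k\<in>K. (l(a := m)) k * g k x) = (\<Sum>k\<in>K. l k * g k x)"
      by (rule sum.cong) (use insert.hyps in auto)
    thus ?thesis using insert.hyps by simp
  qed
  show ?case
  proof (intro exI[of _ "l(a:=m)"] conjI ballI)
    fix k assume "k \<in> insert a K" thus "0 \<le> (l(a:=m)) k" using l m by auto
  next
    fix x assume x: "x \<in> X"
    show "F x - (\<Sum>k\<in>insert a K. (l(a:=m)) k * g k x) \<le> p"
      unfolding eq using m(2) x by (simp add: algebra_simps)
  qed
qed

lemma psd_Bf: "psd n G \<Longrightarrow> 0 \<le> Bf n G x x"
  by (simp add: psd_def Bf_def)

lemma psd_sym_Bf: "psd n G \<Longrightarrow> Bf n G x y = Bf n G y x"
  by (simp add: psd_def Bf_sym)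

lemma Bf_expand: "Bf n G (\<lambda>m. x m + t * y m) (\<lambda>m. x m + t * y m)
   = Bf n G x x + t * (Bf n G x y + Bf n G y x) + t\<^sup>2 * Bf n G y y"
  by (simp add: Bf_add1 Bf_add2 Bf_cmult1 Bf_cmult2 algebra_simps power2_eq_square)

lemma CS:
  assumes "psd n G"
  shows "(Bf n G x y)\<^sup>2 \<le> Bf n G x x * Bf n G y y"
proof -
  define a where "a = Bf n G x x"
  define b where "b = Bf n G x y"
  define c where "c = Bf n G y y"
  have q: "0 \<le> a + 2 * t * b + t\<^sup>2 * c" for t
    using psd_Bf[OF assms, of "\<lambda>m. x m + t * y m"] psd_sym_Bf[OF assms, of y x]
    unfolding Bf_expand a_def b_def c_def by (simp add: algebra_simps)
  have a: "a \<ge> 0" "c \<ge> 0" using psd_Bf[OF assms] by (auto simp: a_def c_def)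
  have "b\<^sup>2 \<le> a * c"
  proof (cases "c = 0")
    case True
    have "b = 0"
    proof (rule ccontr)
      assume "b \<noteq> 0"
      have "0 \<le> a + 2 * (-(a + 1) / (2 * b)) * b" using q[of "-(a + 1) / (2 * b)"] True by simp
      also have "\<dots> = -1" using \<open>b \<noteq> 0\<close> by (simp add: field_simps)
      finally show False by simp
    qed
    thus ?thesis using True by simp
  next
    case False
    hence c: "c > 0" using a by simp
    have "0 \<le> a + 2 * (- b / c) * b + (- b / c)\<^sup>2 * c" by (rule q)
    also have "\<dots> = a - b\<^sup>2 / c" using c by (simp add: field_simps power2_eq_square)
    finally have "b\<^sup>2 / c \<le> a" by simp
    thus ?thesis using c by (simp add: divide_le_eq mult.commute)
  qed
  thus ?thesis by (simp add: a_def b_def c_def)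
qed

lemma Bf_unit: assumes "k < n" "l < n" shows "Bf n G (uvec (Some k)) (uvec (Some l)) = G k l"
proof -
  have "(\<Sum>la<n. (if ka = k then 1 else 0) * G ka la * (if la = l then 1 else 0)) = (if ka = k then G ka l else 0)" for ka
  proof -
    have "(\<Sum>la<n. (if ka = k then 1 else 0) * G ka la * (if la = l then 1 else 0))
       = (\<Sum>la<n. if la = l then (if ka = k then G ka l else 0) else 0)" by (rule sum.cong) auto
    thus ?thesis using assms by simp
  qed
  thus ?thesis unfolding Bf_def uvec_def using assms by simp
qed

lemma psd_entry:
  assumes "psd n G" "k < n" "l < n"
  shows "\<bar>G k l\<bar> \<le> (G k k + G l l) / 2" "0 \<le> G k k"
proof -
  have 1: "(G k l)\<^sup>2 \<le> G k k * G l l"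
    using CS[OF assms(1), of "uvec (Some k)" "uvec (Some l)"] assms by (simp add: Bf_unit)
  have 2: "0 \<le> G k k" "0 \<le> G l l"
    using psd_Bf[OF assms(1), of "uvec (Some k)"] psd_Bf[OF assms(1), of "uvec (Some l)"] assms
    by (auto simp: Bf_unit)
  have "((G k k + G l l) / 2)\<^sup>2 - G k k * G l l = ((G k k - G l l) / 2)\<^sup>2"
    by (simp add: power2_eq_square field_simps)
  hence "(G k l)\<^sup>2 \<le> ((G k k + G l l) / 2)\<^sup>2"
    using 1 by (smt (verit) zero_le_power2)
  hence "\<bar>G k l\<bar> \<le> \<bar>(G k k + G l l) / 2\<bar>" using abs_le_square_iff by blast
  thus "\<bar>G k l\<bar> \<le> (G k k + G l l) / 2" using 2 by (simp add: abs_of_nonneg)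
  show "0 \<le> G k k" by (fact 2)
qed

definition nq :: "nat \<Rightarrow> (nat\<Rightarrow>nat\<Rightarrow>real) \<Rightarrow> (nat\<Rightarrow>real) \<Rightarrow> real" where
  "nq n G x = sqrt (Bf n G x x)"

lemma nq_triangle:
  assumes "psd n G"
  shows "nq n G (\<lambda>m. x m + y m) \<le> nq n G x + nq n G y"
proof -
  have xy: "Bf n G x y \<le> sqrt (Bf n G x x) * sqrt (Bf n G y y)"
    using CS[OF assms, of x y] psd_Bf[OF assms, of x] psd_Bf[OF assms, of y]
    by (metis real_le_rsqrt real_sqrt_mult)
  have "Bf n G (\<lambda>m. x m + y m) (\<lambda>m. x m + y m) = Bf n G x x + 2 * Bf n G x y + Bf n G y y"
    using psd_sym_Bf[OF assms, of y x] by (simp add: Bf_add1 Bf_add2)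
  also have "\<dots> \<le> (sqrt (Bf n G x x) + sqrt (Bf n G y y))\<^sup>2"
    using xy psd_Bf[OF assms, of x] psd_Bf[OF assms, of y] by (simp add: power2_eq_square algebra_simps)
  finally have "sqrt (Bf n G (\<lambda>m. x m + y m) (\<lambda>m. x m + y m)) \<le> sqrt ((sqrt (Bf n G x x) + sqrt (Bf n G y y))\<^sup>2)"
    by (rule real_sqrt_le_mono)
  also have "\<dots> = sqrt (Bf n G x x) + sqrt (Bf n G y y)"
    using psd_Bf[OF assms, of x] psd_Bf[OF assms, of y] by simp
  finally show ?thesis unfolding nq_def .
qed

lemma nq_scale: "nq n G (\<lambda>m. c * x m) = \<bar>c\<bar> * nq n G x"
  by (simp add: nq_def Bf_cmult1 Bf_cmult2 real_sqrt_mult mult.assoc[symmetric])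

lemma nq_sum:
  assumes "psd n G" "finite K"
  shows "nq n G (\<lambda>m. \<Sum>k\<in>K. c k * y k m) \<le> (\<Sum>k\<in>K. \<bar>c k\<bar> * nq n G (y k))"
  using assms(2)
proof (induction K rule: finite_induct)
  case empty then show ?case by (simp add: nq_def)
next
  case (insert a K)
  have "nq n G (\<lambda>m. \<Sum>k\<in>insert a K. c k * y k m) = nq n G (\<lambda>m. c a * y a m + (\<Sum>k\<in>K. c k * y k m))"
    using insert.hyps by simp
  also have "\<dots> \<le> nq n G (\<lambda>m. c a * y a m) + nq n G (\<lambda>m. \<Sum>k\<in>K. c k * y k m)"
    by (rule nq_triangle[OF assms(1)])
  also have "\<dots> \<le> \<bar>c a\<bar> * nq n G (y a) + (\<Sum>k\<in>K. \<bar>c k\<bar> * nq n G (y k))"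
    using insert.IH by (simp add: nq_scale)
  finally show ?case using insert.hyps by simp
qed

lemma Bf_restrict: "Bf (Suc n) M (x(n:=0)) (x(n:=0)) = Bf n M x x"
proof -
  have "(\<Sum>l<n. (x(n := 0)) k * M k l * (x(n := 0)) l) = (\<Sum>l<n. x k * M k l * x l)" if "k < n" for k
    using that by (intro sum.cong) auto
  hence "(\<Sum>k<n. \<Sum>l<n. (x(n := 0)) k * M k l * (x(n := 0)) l) = (\<Sum>k<n. \<Sum>l<n. x k * M k l * x l)"
    by (intro sum.cong) auto
  thus ?thesis unfolding Bf_def by simp
qed

lemma psd_restrict: assumes "psd (Suc n) M" shows "psd n M"
  unfolding psd_def
proof
  show "sym_mat n M" using assms unfolding psd_def sym_mat_def by auto
  show "\<forall>x. 0 \<le> (\<Sum>i<n. \<Sum>j<n. x i * M i j * x j)"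
  proof
    fix x
    have "0 \<le> Bf (Suc n) M (x(n:=0)) (x(n:=0))" by (rule psd_Bf[OF assms])
    thus "0 \<le> (\<Sum>i<n. \<Sum>j<n. x i * M i j * x j)" unfolding Bf_restrict by (simp add: Bf_def)
  qed
qed

lemma tr_restrict:
  assumes "\<forall>k<Suc n. G n k = 0 \<and> G k n = 0"
  shows "trace_prod (Suc n) S G = trace_prod n S G"
  unfolding trace_prod_def using assms by simp

lemma Bf_mat_diff: "Bf n (\<lambda>k l. A k l - B k l) x y = Bf n A x y - Bf n B x y"
  by (simp add: Bf_def algebra_simps sum_subtractf)

lemma Bf_outer: "Bf n (outer w w) x x = (\<Sum>k<n. x k * w k)\<^sup>2"
  by (simp add: Bf_def outer_def power2_eq_square sum_product mult_ac)

lemma Bf_unit_right: assumes "k < n" shows "Bf n G x (uvec (Some k)) = (\<Sum>i<n. x i * G i k)"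
proof -
  have "(\<Sum>l<n. x i * G i l * (if l = k then 1 else 0)) = x i * G i k" for i
  proof -
    have "(\<Sum>l<n. x i * G i l * (if l = k then 1 else 0)) = (\<Sum>l<n. if l = k then x i * G i k else 0)"
      by (rule sum.cong) auto
    thus ?thesis using assms by simp
  qed
  thus ?thesis unfolding Bf_def uvec_def by simp
qed

lemma psd_outer: "psd n (outer w w)"
  unfolding psd_def sym_mat_def
  using Bf_outer[of n w] unfolding Bf_def by (auto simp: outer_def mult.commute)

lemma trace_psd:
  "psd n S \<Longrightarrow> psd n G \<Longrightarrow> 0 \<le> trace_prod n S G"
proof (induction n arbitrary: S G)
  case 0
  then show ?case by (simp add: trace_prod_def)
next
  case (Suc n)
  have symG: "\<And>k l. k < Suc n \<Longrightarrow> l < Suc n \<Longrightarrow> G k l = G l k"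
    using Suc.prems(2) unfolding psd_def sym_mat_def by auto
  define a where "a = G n n"
  have a0: "0 \<le> a" using psd_entry(2)[OF Suc.prems(2), of n n] by (simp add: a_def)
  show ?case
  proof (cases "a = 0")
    case True
    have z: "G k n = 0" if "k < Suc n" for k
    proof -
      have "(G k n)\<^sup>2 \<le> G k k * G n n"
        using CS[OF Suc.prems(2), of "uvec (Some k)" "uvec (Some n)"] that by (simp add: Bf_unit)
      thus ?thesis using True by (simp add: a_def)
    qed
    have "trace_prod (Suc n) S G = trace_prod n S G"
      by (rule tr_restrict) (use z symG in auto)
    thus ?thesis using Suc.IH[OF psd_restrict[OF Suc.prems(1)] psd_restrict[OF Suc.prems(2)]] by simp
  next
    case False
    hence apos: "a > 0" using a0 by simp
    define w where "w k = G k n / sqrt a" for k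
    define G' where "G' = (\<lambda>k l. G k l - outer w w k l)"
    have wn: "w k * w n = G k n" for k
      using apos by (simp add: w_def a_def power2_eq_square[symmetric])
    have z: "G' n k = 0 \<and> G' k n = 0" if "k < Suc n" for k
      using wn[of k] symG[of k n] that by (simp add: G'_def outer_def mult.commute)
    have psdG': "psd (Suc n) G'"
      unfolding psd_def
    proof
      show "sym_mat (Suc n) G'" using symG unfolding sym_mat_def G'_def outer_def by (auto simp: mult.commute)
      show "\<forall>x. 0 \<le> (\<Sum>i<Suc n. \<Sum>j<Suc n. x i * G' i j * x j)"
      proof
        fix x
        have "Bf (Suc n) G' x x = Bf (Suc n) G x x - (\<Sum>k<Suc n. x k * w k)\<^sup>2"
          unfolding G'_def Bf_mat_diff by (simp add: Bf_outer[unfolded outer_def] outer_def)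
        also have "(\<Sum>k<Suc n. x k * w k) = Bf (Suc n) G x (uvec (Some n)) / sqrt a"
          by (simp add: Bf_unit_right w_def sum_divide_distrib add_divide_distrib)
        also have "(Bf (Suc n) G x (uvec (Some n)) / sqrt a)\<^sup>2 = (Bf (Suc n) G x (uvec (Some n)))\<^sup>2 / a"
          using apos by (simp add: power_divide)
        finally have eq: "Bf (Suc n) G' x x = Bf (Suc n) G x x - (Bf (Suc n) G x (uvec (Some n)))\<^sup>2 / a" .
        have "(Bf (Suc n) G x (uvec (Some n)))\<^sup>2 \<le> Bf (Suc n) G x x * a"
          using CS[OF Suc.prems(2), of x "uvec (Some n)"] by (simp add: Bf_unit a_def)
        hence "(Bf (Suc n) G x (uvec (Some n)))\<^sup>2 / a \<le> Bf (Suc n) G x x"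
          using apos by (simp add: divide_le_eq)
        thus "0 \<le> (\<Sum>i<Suc n. \<Sum>j<Suc n. x i * G' i j * x j)"
          using eq unfolding Bf_def by simp
      qed
    qed
    have GG: "G = (\<lambda>k l. G' k l + outer w w k l)" by (simp add: G'_def)
    have "trace_prod (Suc n) S G = trace_prod (Suc n) S G' + trace_prod (Suc n) S (outer w w)"
      by (subst GG, subst tr_add) simp
    also have "trace_prod (Suc n) S G' = trace_prod n S G'"
      by (rule tr_restrict) (use z in auto)
    also have "trace_prod (Suc n) S (outer w w) = Bf (Suc n) S w w" by (rule tr_outer)
    finally show ?thesis
      using Suc.IH[OF psd_restrict[OF Suc.prems(1)] psd_restrict[OF psdG']] psd_Bf[OF Suc.prems(1), of w]
      by simp
  qed
qed

fun Qp :: "(nat \<Rightarrow> nat \<Rightarrow> real) \<Rightarrow> nat \<Rightarrow> nat \<Rightarrow> real poly" where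
  "Qp h 0 = (\<lambda>k. 1)"
| "Qp h (Suc n) = (Qp h n)(Suc n := 1 - pCons 0 (\<Sum>k\<le>n. smult (h (Suc n) k) (Qp h n k)))"

definition Pp :: "(nat \<Rightarrow> nat \<Rightarrow> real) \<Rightarrow> nat \<Rightarrow> real poly" where
  "Pp h i = Qp h i i"

lemma Qp_stable: "k \<le> n \<Longrightarrow> Qp h n k = Qp h k k"
proof (induction n)
  case 0 thus ?case by simp
next
  case (Suc n)
  show ?case
  proof (cases "k = Suc n")
    case True thus ?thesis by simp
  next
    case False
    hence "k \<le> n" using Suc.prems by simp
    hence "Qp h n k = Qp h k k" by (rule Suc.IH)
    moreover have "Qp h (Suc n) k = Qp h n k" using False by simp
    ultimately show ?thesis by simp
  qed
qed

lemma Pp_rec: "Pp h i = 1 - pCons 0 (\<Sum>k<i. smult (h i k) (Pp h k))"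
proof (cases i)
  case 0 then show ?thesis by (simp add: Pp_def)
next
  case (Suc n)
  have "(\<Sum>k\<le>n. smult (h (Suc n) k) (Qp h n k)) = (\<Sum>k<Suc n. smult (h (Suc n) k) (Pp h k))"
    unfolding lessThan_Suc_atMost
  proof (intro sum.cong refl)
    fix k assume "k \<in> {..n}"
    hence "Qp h n k = Qp h k k" by (intro Qp_stable) simp
    thus "smult (h (Suc n) k) (Qp h n k) = smult (h (Suc n) k) (Pp h k)" by (simp add: Pp_def)
  qed
  then show ?thesis using Suc by (simp add: Pp_def)
qed

lemma Pp_coeff:
  assumes "\<forall>i. 1 \<le> i \<and> i \<le> N \<longrightarrow> h i (i - 1) \<noteq> 0" "i \<le> N"
  shows "coeff (Pp h i) i \<noteq> 0 \<and> (\<forall>m>i. coeff (Pp h i) m = 0)"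
  using assms(2)
proof (induction i rule: less_induct)
  case (less i)
  have cf: "coeff (Pp h i) m = (if m = 0 then 1 else 0) - (if m = 0 then 0 else (\<Sum>k<i. h i k * coeff (Pp h k) (m - 1)))" for m
    by (subst Pp_rec) (cases m, auto simp: coeff_sum)
  show ?case
  proof (cases i)
    case 0 then show ?thesis using cf by auto
  next
    case (Suc j)
    have IH: "\<And>k. k < i \<Longrightarrow> coeff (Pp h k) k \<noteq> 0 \<and> (\<forall>m>k. coeff (Pp h k) m = 0)"
      using less by auto
    have "(\<Sum>k<i. h i k * coeff (Pp h k) j) = h i j * coeff (Pp h j) j"
      unfolding Suc lessThan_Suc using IH Suc by (simp add: sum.neutral)
    moreover have "h i j \<noteq> 0" using assms(1) less.prems Suc by auto
    moreover have "coeff (Pp h j) j \<noteq> 0" using IH Suc by auto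
    ultimately have 1: "coeff (Pp h i) i \<noteq> 0" using cf[of i] Suc by simp
    have 2: "coeff (Pp h i) m = 0" if "m > i" for m
    proof -
      have "(\<Sum>k<i. h i k * coeff (Pp h k) (m - 1)) = 0"
        using IH that Suc by (intro sum.neutral) auto
      thus ?thesis using cf[of m] that by simp
    qed
    show ?thesis using 1 2 by auto
  qed
qed

lemma Pp_distinct:
  assumes "\<forall>i. 1 \<le> i \<and> i \<le> N \<longrightarrow> h i (i - 1) \<noteq> 0" "i \<le> N" "j \<le> N" "i \<noteq> j"
  shows "Pp h i \<noteq> Pp h j"
proof -
  have *: "Pp h a \<noteq> Pp h b" if ab: "a \<le> N" "b \<le> N" "b < a" for a b
  proof -
    have c1: "coeff (Pp h a) a \<noteq> 0" using Pp_coeff[where N=N and h=h, OF assms(1) ab(1)] by blast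
    have c2: "coeff (Pp h b) a = 0" using Pp_coeff[where N=N and h=h, OF assms(1) ab(2)] ab(3) by blast
    show ?thesis using c1 c2 by auto
  qed
  show ?thesis
  proof (cases "i < j")
    case True thus ?thesis using *[of j i] assms by auto
  next
    case False hence "j < i" using assms(4) by simp
    thus ?thesis using *[of i j] assms by auto
  qed
qed

lemma Pp_nonzero:
  assumes "\<forall>i. 1 \<le> i \<and> i \<le> N \<longrightarrow> h i (i - 1) \<noteq> 0" "i \<le> N"
  shows "Pp h i \<noteq> 0"
  using Pp_coeff[where N=N and h=h, OF assms] by auto

lemma good_c:
  assumes "\<forall>i. 1 \<le> i \<and> i \<le> N \<longrightarrow> h i (i - 1) \<noteq> 0" "mu < L"
  shows "\<exists>c. mu < c \<and> c < L \<and> (\<forall>i\<le>N. poly (Pp h i) c \<noteq> 0) \<and>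
          (\<forall>i\<le>N. \<forall>j\<le>N. i \<noteq> j \<longrightarrow> poly (Pp h i) c \<noteq> poly (Pp h j) c)"
proof -
  define D where "D = (\<Prod>i\<le>N. Pp h i * (\<Prod>j\<in>{..N} - {i}. (Pp h i - Pp h j)))"
  have f1: "Pp h i * (\<Prod>j\<in>{..N} - {i}. (Pp h i - Pp h j)) \<noteq> 0" if i: "i \<le> N" for i
  proof -
    have "(\<Prod>j\<in>{..N} - {i}. (Pp h i - Pp h j)) \<noteq> 0"
      using Pp_distinct[where N=N and h=h, OF assms(1) i] by (subst prod_zero_iff) auto
    thus ?thesis using Pp_nonzero[where N=N and h=h, OF assms(1) i] by simp
  qed
  have "D \<noteq> 0" unfolding D_def using f1 by (subst prod_zero_iff) auto
  hence fin: "finite {x. poly D x = 0}" by (rule poly_roots_finite)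
  have ns: "\<not> {mu<..<L} \<subseteq> {x. poly D x = 0}"
  proof
    assume "{mu<..<L} \<subseteq> {x. poly D x = 0}"
    hence "finite {mu<..<L}" using fin finite_subset by blast
    thus False using infinite_Ioo[OF assms(2)] by simp
  qed
  obtain c where c: "mu < c" "c < L" "poly D c \<noteq> 0" using ns by (auto simp: subset_iff)
  have "\<forall>i\<le>N. poly (Pp h i) c \<noteq> 0 \<and> (\<forall>j\<in>{..N} - {i}. poly (Pp h i) c - poly (Pp h j) c \<noteq> 0)"
    using c(3) unfolding D_def by (simp add: poly_prod prod_zero_iff)
  thus ?thesis using c by auto
qed

lemma tr_swap: "trace_prod n M P = trace_prod n P M"
  unfolding trace_prod_def by (subst sum.swap) (simp add: mult.commute)

lemma tr_add1: "trace_prod n (\<lambda>k l. P k l + Q k l) G = trace_prod n P G + trace_prod n Q G"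
  by (simp add: trace_prod_def algebra_simps sum.distrib)
lemma tr_diff1: "trace_prod n (\<lambda>k l. P k l - Q k l) G = trace_prod n P G - trace_prod n Q G"
  by (simp add: trace_prod_def algebra_simps sum_subtractf)
lemma tr_cmult1: "trace_prod n (\<lambda>k l. c * P k l) G = c * trace_prod n P G"
  by (simp add: trace_prod_def algebra_simps sum_distrib_left)
lemma tr_sum1: "trace_prod n (\<lambda>k l. \<Sum>i\<in>I. M i k l) G = (\<Sum>i\<in>I. trace_prod n (M i) G)"
  unfolding trace_prod_def sum_distrib_right
  by (subst sum.swap, subst (2) sum.swap, simp)

lemma fval_sum: assumes "i \<in> idx N" shows "(\<Sum>m\<le>N. vvec i m * f m) = fval f i"
proof (cases i)
  case None thus ?thesis by (simp add: vvec_def uvec_def fval_def)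
next
  case (Some x)
  hence x: "x \<le> N" using assms by (auto simp: idx_def)
  have "(\<Sum>m\<le>N. vvec i m * f m) = (\<Sum>m\<le>N. if m = x then f x else 0)"
    by (rule sum.cong) (auto simp: Some vvec_def uvec_def)
  thus ?thesis using x Some by (simp add: fval_def)
qed

lemma dual_trace:
  "trace_prod n (\<lambda>k l. tau * ARmat N k l - C k l
        + (\<Sum>i\<in>idx N. \<Sum>j\<in>idx N. lam i j * Amat mu L N h i j k l)) G
   = tau * trace_prod n G (ARmat N) - trace_prod n C G
     + (\<Sum>i\<in>idx N. \<Sum>j\<in>idx N. lam i j * trace_prod n G (Amat mu L N h i j))"
  by (simp only: tr_add1 tr_diff1 tr_cmult1 tr_sum1) (simp add: tr_swap)

lemma weak_duality:
  assumes df: "dual_feasible mu L N h b C lam tau" and pf: "primal_feasible mu L R N h G f"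
  shows "primal_obj N b C G f \<le> tau * R\<^sup>2"
proof -
  let ?S = "\<lambda>k l. tau * ARmat N k l - C k l + (\<Sum>i\<in>idx N. \<Sum>j\<in>idx N. lam i j * Amat mu L N h i j k l)"
  have psdS: "psd (N + 2) ?S" and psdG: "psd (N + 2) G"
    using df pf unfolding dual_feasible_def primal_feasible_def by auto
  have tS: "0 \<le> trace_prod (N + 2) ?S G" by (rule trace_psd[OF psdS psdG])
  have bm: "b m = (\<Sum>i\<in>idx N. \<Sum>j\<in>idx N. lam i j * (vvec j m - vvec i m))" if "m \<le> N" for m
    using df that unfolding dual_feasible_def by auto
  have "(\<Sum>m\<le>N. b m * f m) = (\<Sum>m\<le>N. \<Sum>i\<in>idx N. \<Sum>j\<in>idx N. lam i j * (vvec j m * f m - vvec i m * f m))"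
    by (intro sum.cong refl) (simp add: bm sum_distrib_left sum_distrib_right sum_subtractf algebra_simps)
  also have "\<dots> = (\<Sum>i\<in>idx N. \<Sum>j\<in>idx N. lam i j * ((\<Sum>m\<le>N. vvec j m * f m) - (\<Sum>m\<le>N. vvec i m * f m)))"
    by (subst sum.swap, rule sum.cong[OF refl], subst sum.swap, intro sum.cong refl)
       (simp add: sum_distrib_left sum_subtractf right_diff_distrib)
  also have "\<dots> = (\<Sum>i\<in>idx N. \<Sum>j\<in>idx N. lam i j * (fval f j - fval f i))"
    by (intro sum.cong refl) (simp add: fval_sum)
  finally have bf: "(\<Sum>m\<le>N. b m * f m) = (\<Sum>i\<in>idx N. \<Sum>j\<in>idx N. lam i j * (fval f j - fval f i))" .
  have obj: "primal_obj N b C G f = (\<Sum>i\<in>idx N. \<Sum>j\<in>idx N. lam i j * (fval f j - fval f i + trace_prod (N + 2) G (Amat mu L N h i j)))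
      + tau * trace_prod (N + 2) G (ARmat N) - trace_prod (N + 2) ?S G"
  proof -
    have split: "(\<Sum>i\<in>idx N. \<Sum>j\<in>idx N. lam i j * (fval f j - fval f i + trace_prod (N + 2) G (Amat mu L N h i j)))
      = (\<Sum>i\<in>idx N. \<Sum>j\<in>idx N. lam i j * (fval f j - fval f i)) + (\<Sum>i\<in>idx N. \<Sum>j\<in>idx N. lam i j * trace_prod (N + 2) G (Amat mu L N h i j))"
      by (simp add: sum.distrib[symmetric] distrib_left)
    show ?thesis unfolding primal_obj_def dual_trace bf split by simp
  qed
  have c1: "(\<Sum>i\<in>idx N. \<Sum>j\<in>idx N. lam i j * (fval f j - fval f i + trace_prod (N + 2) G (Amat mu L N h i j))) \<le> 0"
    using df pf unfolding dual_feasible_def primal_feasible_def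
    by (intro sum_nonpos mult_nonneg_nonpos) auto
  have c2: "tau * trace_prod (N + 2) G (ARmat N) \<le> tau * R\<^sup>2"
    using df pf unfolding dual_feasible_def primal_feasible_def by (intro mult_left_mono) auto
  show ?thesis using obj c1 c2 tS by linarith
qed

lemma hvec_None[simp]: "hvec N h None = (\<lambda>_. 0)" by (simp add: hvec_def)
lemma uvec_None[simp]: "uvec None = (\<lambda>_. 0)" by (simp add: uvec_def)

lemma AR_outer: "ARmat N = outer (uvec (Some (N+1))) (uvec (Some (N+1)))"
  by (auto simp: ARmat_def outer_def uvec_def fun_eq_iff)

lemma tr_AR: "trace_prod (N+2) G (ARmat N) = G (N+1) (N+1)"
  by (simp add: AR_outer tr_outer Bf_unit)
lemma tr_AR': "trace_prod (Suc (Suc N)) G (ARmat N) = G (Suc N) (Suc N)"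
  using tr_AR[of N G] by simp

lemma hvec_decomp: "i \<le> N \<Longrightarrow> hvec N h (Some i) =
   (\<lambda>m. uvec (Some (N+1)) m + (\<Sum>k<i. (- h i k) * uvec (Some k) m))"
proof (rule ext)
  fix m assume i: "i \<le> N"
  have s: "(\<Sum>k<i. (- h i k) * uvec (Some k) m) = (if m < i then - h i m else 0)"
  proof -
    have "(\<Sum>k<i. (- h i k) * uvec (Some k) m) = (\<Sum>k<i. if k = m then - h i m else 0)"
      by (rule sum.cong) (auto simp: uvec_def)
    thus ?thesis by simp
  qed
  show "hvec N h (Some i) m = uvec (Some (N+1)) m + (\<Sum>k<i. (- h i k) * uvec (Some k) m)"
    unfolding s using i by (auto simp: hvec_def uvec_def)
qed

lemma tr_bound:
  assumes "\<forall>k<n. \<forall>l<n. \<bar>G k l\<bar> \<le> D"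
  shows "\<bar>trace_prod n G P\<bar> \<le> D * (\<Sum>k<n. \<Sum>l<n. \<bar>P l k\<bar>)"
proof -
  have "\<bar>trace_prod n G P\<bar> \<le> (\<Sum>k<n. \<Sum>l<n. \<bar>G k l * P l k\<bar>)"
    unfolding trace_prod_def by (rule order.trans[OF sum_abs sum_mono]) (rule sum_abs)
  also have "\<dots> \<le> (\<Sum>k<n. \<Sum>l<n. D * \<bar>P l k\<bar>)"
    using assms by (intro sum_mono) (auto simp: abs_mult intro: mult_right_mono)
  finally show ?thesis by (simp add: sum_distrib_left)
qed

context
  fixes mu L R :: real and N :: nat and h :: "nat \<Rightarrow> nat \<Rightarrow> real"
  assumes muL: "0 \<le> mu" "mu < L"
begin

lemma nq_u_bound:
  assumes pf: "primal_feasible mu L R N h G f" and i: "i \<le> N"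
  shows "nq (N+2) G (uvec (Some i)) \<le> (L + mu) * nq (N+2) G (hvec N h (Some i))"
proof -
  let ?u = "uvec (Some i)" and ?x = "hvec N h (Some i)"
  have psdG: "psd (N+2) G" using pf by (simp add: primal_feasible_def)
  have iI: "Some i \<in> idx N" "None \<in> idx N" using i by (auto simp: idx_def)
  have c1: "fval f None - fval f (Some i) + trace_prod (N + 2) G (Amat mu L N h (Some i) None) \<le> 0"
   and c2: "fval f (Some i) - fval f None + trace_prod (N + 2) G (Amat mu L N h None (Some i)) \<le> 0"
    using pf iI unfolding primal_feasible_def by blast+
  have sym: "Bf (N+2) G ?x ?u = Bf (N+2) G ?u ?x" by (rule psd_sym_Bf[OF psdG])
  have "trace_prod (N + 2) G (Amat mu L N h (Some i) None) + trace_prod (N + 2) G (Amat mu L N h None (Some i)) \<le> 0"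
    using c1 c2 by simp
  hence "(2 * Bf (N+2) G ?u ?u - 2 * (L + mu) * Bf (N+2) G ?u ?x + 2 * L * mu * Bf (N+2) G ?x ?x) / (2 * (L - mu)) \<le> 0"
    unfolding tr_Amat Let_def hvec_None uvec_None using sym
    by (simp add: add_divide_distrib[symmetric] algebra_simps)
  hence q: "Bf (N+2) G ?u ?u \<le> (L + mu) * Bf (N+2) G ?u ?x - L * mu * Bf (N+2) G ?x ?x"
    using muL by (simp add: divide_le_0_iff algebra_simps)
  have "L * mu * Bf (N+2) G ?x ?x \<ge> 0" using muL psd_Bf[OF psdG] by simp
  hence "Bf (N+2) G ?u ?u \<le> (L + mu) * Bf (N+2) G ?u ?x" using q by linarith
  also have "Bf (N+2) G ?u ?x \<le> nq (N+2) G ?u * nq (N+2) G ?x"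
  proof -
    have "(Bf (N+2) G ?u ?x)\<^sup>2 \<le> (nq (N+2) G ?u * nq (N+2) G ?x)\<^sup>2"
      using CS[OF psdG, of ?u ?x] psd_Bf[OF psdG, of ?u] psd_Bf[OF psdG, of ?x]
      by (simp add: nq_def power_mult_distrib)
    moreover have "0 \<le> nq (N+2) G ?u * nq (N+2) G ?x"
      using psd_Bf[OF psdG, of ?u] psd_Bf[OF psdG, of ?x] by (simp add: nq_def)
    ultimately have "\<bar>Bf (N+2) G ?u ?x\<bar> \<le> nq (N+2) G ?u * nq (N+2) G ?x"
      using abs_le_square_iff[of "Bf (N+2) G ?u ?x" "nq (N+2) G ?u * nq (N+2) G ?x"] by simp
    thus ?thesis by simp
  qed
  finally have *: "Bf (N+2) G ?u ?u \<le> (L + mu) * (nq (N+2) G ?u * nq (N+2) G ?x)"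
    using muL by (simp add: mult_left_mono)
  have nn: "0 \<le> nq (N+2) G ?u" using psd_Bf[OF psdG, of ?u] by (simp add: nq_def)
  have sq: "Bf (N+2) G ?u ?u = (nq (N+2) G ?u)\<^sup>2" using psd_Bf[OF psdG, of ?u] by (simp add: nq_def)
  show ?thesis
  proof (cases "nq (N+2) G ?u = 0")
    case True
    have "0 \<le> nq (N+2) G ?x" using psd_Bf[OF psdG, of ?x] by (simp add: nq_def)
    thus ?thesis using True muL by simp
  next
    case False
    hence pos: "nq (N+2) G ?u > 0" using nn by simp
    have "nq (N+2) G ?u * nq (N+2) G ?u \<le> nq (N+2) G ?u * ((L + mu) * nq (N+2) G ?x)"
      using * sq by (simp add: power2_eq_square mult_ac)
    thus ?thesis using pos by simp
  qed
qed

lemma nq_e_bound: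
  assumes pf: "primal_feasible mu L R N h G f"
  shows "nq (N+2) G (uvec (Some (N+1))) \<le> \<bar>R\<bar>"
proof -
  have "G (N+1) (N+1) \<le> R\<^sup>2" using pf by (simp add: primal_feasible_def tr_AR')
  hence "sqrt (G (N+1) (N+1)) \<le> sqrt (R\<^sup>2)" by (rule real_sqrt_le_mono)
  thus ?thesis by (simp add: nq_def Bf_unit)
qed

lemma nq_h_bound:
  assumes pf: "primal_feasible mu L R N h G f" and i: "i \<le> N"
  shows "nq (N+2) G (hvec N h (Some i)) \<le> \<bar>R\<bar> + (\<Sum>k<i. \<bar>h i k\<bar> * nq (N+2) G (uvec (Some k)))"
proof -
  have psdG: "psd (N+2) G" using pf by (simp add: primal_feasible_def)
  have "nq (N+2) G (hvec N h (Some i)) \<le> nq (N+2) G (uvec (Some (N+1))) + nq (N+2) G (\<lambda>m. \<Sum>k<i. (- h i k) * uvec (Some k) m)"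
    unfolding hvec_decomp[OF i] by (rule nq_triangle[OF psdG])
  also have "\<dots> \<le> \<bar>R\<bar> + (\<Sum>k<i. \<bar>- h i k\<bar> * nq (N+2) G (uvec (Some k)))"
    using nq_e_bound[OF pf] nq_sum[OF psdG, of "{..<i}" "\<lambda>k. - h i k" "\<lambda>k. uvec (Some k)"] by simp
  finally show ?thesis by simp
qed

lemma u_bounds:
  "i \<le> N \<Longrightarrow> \<exists>B. \<forall>G f. primal_feasible mu L R N h G f \<longrightarrow> nq (N+2) G (uvec (Some i)) \<le> B"
proof (induction i rule: less_induct)
  case (less i)
  have "\<forall>k\<in>{..<i}. \<exists>B. \<forall>G f. primal_feasible mu L R N h G f \<longrightarrow> nq (N+2) G (uvec (Some k)) \<le> B"
    using less by auto
  then obtain \<beta> where \<beta>: "\<And>k G f. k < i \<Longrightarrow> primal_feasible mu L R N h G f \<Longrightarrow> nq (N+2) G (uvec (Some k)) \<le> \<beta> k"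
    by (metis bchoice lessThan_iff)
  show ?case
  proof (intro exI allI impI)
    fix G f assume pf: "primal_feasible mu L R N h G f"
    have "nq (N+2) G (uvec (Some i)) \<le> (L + mu) * nq (N+2) G (hvec N h (Some i))"
      by (rule nq_u_bound[OF pf less.prems])
    also have "\<dots> \<le> (L + mu) * (\<bar>R\<bar> + (\<Sum>k<i. \<bar>h i k\<bar> * nq (N+2) G (uvec (Some k))))"
      using muL nq_h_bound[OF pf less.prems] by (intro mult_left_mono) auto
    also have "\<dots> \<le> (L + mu) * (\<bar>R\<bar> + (\<Sum>k<i. \<bar>h i k\<bar> * \<beta> k))"
      using muL \<beta>[OF _ pf] by (intro mult_left_mono add_left_mono sum_mono mult_left_mono) auto
    finally show "nq (N+2) G (uvec (Some i)) \<le> (L + mu) * (\<bar>R\<bar> + (\<Sum>k<i. \<bar>h i k\<bar> * \<beta> k))" .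
  qed
qed

lemma entry_bound:
  "\<exists>D\<ge>0. \<forall>G f. primal_feasible mu L R N h G f \<longrightarrow> (\<forall>k<N+2. \<forall>l<N+2. \<bar>G k l\<bar> \<le> D)"
proof -
  have "\<forall>i\<in>{..N}. \<exists>B. \<forall>G f. primal_feasible mu L R N h G f \<longrightarrow> nq (N+2) G (uvec (Some i)) \<le> B"
    using u_bounds by auto
  then obtain \<beta> where \<beta>: "\<And>i G f. i \<le> N \<Longrightarrow> primal_feasible mu L R N h G f \<Longrightarrow> nq (N+2) G (uvec (Some i)) \<le> \<beta> i"
    by (metis bchoice atMost_iff)
  define D where "D = R\<^sup>2 + (\<Sum>i\<le>N. (\<beta> i)\<^sup>2)"
  have D0: "0 \<le> D" unfolding D_def by (intro add_nonneg_nonneg sum_nonneg) auto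
  show ?thesis
  proof (intro exI[of _ D] conjI allI impI)
    fix G f k l assume pf: "primal_feasible mu L R N h G f" and kl: "k < N + 2" "l < N + 2"
    have psdG: "psd (N+2) G" using pf by (simp add: primal_feasible_def)
    have diag: "G m m \<le> D" if m: "m < N + 2" for m
    proof (cases "m \<le> N")
      case True
      have "0 \<le> nq (N+2) G (uvec (Some m))" using psd_Bf[OF psdG] by (simp add: nq_def)
      hence "(nq (N+2) G (uvec (Some m)))\<^sup>2 \<le> (\<beta> m)\<^sup>2"
        using \<beta>[OF True pf] by (simp add: power_mono)
      moreover have "(nq (N+2) G (uvec (Some m)))\<^sup>2 = G m m"
        using psd_Bf[OF psdG, of "uvec (Some m)"] m by (simp add: nq_def Bf_unit)
      moreover have "(\<beta> m)\<^sup>2 \<le> (\<Sum>i\<le>N. (\<beta> i)\<^sup>2)"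
        using True by (intro member_le_sum) auto
      ultimately show ?thesis unfolding D_def by (smt (verit) zero_le_power2)
    next
      case False
      hence "m = N + 1" using m by simp
      hence "G m m \<le> R\<^sup>2" using pf by (simp add: primal_feasible_def tr_AR')
      moreover have "0 \<le> (\<Sum>i\<le>N. (\<beta> i)\<^sup>2)" by (intro sum_nonneg) auto
      ultimately show ?thesis unfolding D_def by simp
    qed
    have "\<bar>G k l\<bar> \<le> (G k k + G l l) / 2" by (rule psd_entry(1)[OF psdG kl])
    thus "\<bar>G k l\<bar> \<le> D" using diag[OF kl(1)] diag[OF kl(2)] by simp
  qed (fact D0)
qed

lemma primal_bounded:
  "\<exists>B. \<forall>G f. primal_feasible mu L R N h G f \<longrightarrow> primal_obj N b C G f \<le> B"
proof -
  obtain D where D0: "0 \<le> D" and D: "\<And>G f k l. primal_feasible mu L R N h G f \<Longrightarrow> k < N+2 \<Longrightarrow> l < N+2 \<Longrightarrow> \<bar>G k l\<bar> \<le> D"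
    using entry_bound by blast
  define M where "M i = (\<Sum>k<N+2. \<Sum>l<N+2. \<bar>Amat mu L N h (Some i) None l k\<bar>)
     + (\<Sum>k<N+2. \<Sum>l<N+2. \<bar>Amat mu L N h None (Some i) l k\<bar>)" for i
  define B where "B = (\<Sum>i\<le>N. \<bar>b i\<bar> * (D * M i)) + D * (\<Sum>k<N+2. \<Sum>l<N+2. \<bar>C l k\<bar>)"
  show ?thesis
  proof (intro exI allI impI)
    fix G f assume pf: "primal_feasible mu L R N h G f"
    have trb: "\<bar>trace_prod (N+2) G P\<bar> \<le> D * (\<Sum>k<N+2. \<Sum>l<N+2. \<bar>P l k\<bar>)" for P
      by (rule tr_bound) (use D[OF pf] in auto)
    have fb: "\<bar>f i\<bar> \<le> D * M i" if i: "i \<le> N" for i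
    proof -
      have iI: "Some i \<in> idx N" "None \<in> idx N" using i by (auto simp: idx_def)
      have c1: "fval f None - fval f (Some i) + trace_prod (N + 2) G (Amat mu L N h (Some i) None) \<le> 0"
       and c2: "fval f (Some i) - fval f None + trace_prod (N + 2) G (Amat mu L N h None (Some i)) \<le> 0"
        using pf iI unfolding primal_feasible_def by blast+
      have "\<bar>trace_prod (N + 2) G (Amat mu L N h (Some i) None)\<bar> \<le> D * (\<Sum>k<N+2. \<Sum>l<N+2. \<bar>Amat mu L N h (Some i) None l k\<bar>)"
        "\<bar>trace_prod (N + 2) G (Amat mu L N h None (Some i))\<bar> \<le> D * (\<Sum>k<N+2. \<Sum>l<N+2. \<bar>Amat mu L N h None (Some i) l k\<bar>)"
        by (rule trb)+
      moreover have "0 \<le> D * (\<Sum>k<N+2. \<Sum>l<N+2. \<bar>Amat mu L N h (Some i) None l k\<bar>)"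
        by (rule mult_nonneg_nonneg[OF D0], intro sum_nonneg abs_ge_zero)
      moreover have "0 \<le> D * (\<Sum>k<N+2. \<Sum>l<N+2. \<bar>Amat mu L N h None (Some i) l k\<bar>)"
        by (rule mult_nonneg_nonneg[OF D0], intro sum_nonneg abs_ge_zero)
      ultimately show ?thesis using c1 c2 unfolding M_def fval_def by (simp add: algebra_simps abs_le_iff)
    qed
    have "(\<Sum>i\<le>N. b i * f i) \<le> (\<Sum>i\<le>N. \<bar>b i\<bar> * (D * M i))"
    proof (intro sum_mono)
      fix i assume "i \<in> {..N}"
      hence "\<bar>f i\<bar> \<le> D * M i" using fb by auto
      hence "\<bar>b i\<bar> * \<bar>f i\<bar> \<le> \<bar>b i\<bar> * (D * M i)" by (simp add: mult_left_mono)
      moreover have "b i * f i \<le> \<bar>b i\<bar> * \<bar>f i\<bar>" by (simp add: abs_mult[symmetric])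
      ultimately show "b i * f i \<le> \<bar>b i\<bar> * (D * M i)" by linarith
    qed
    moreover have "trace_prod (N+2) C G \<le> D * (\<Sum>k<N+2. \<Sum>l<N+2. \<bar>C l k\<bar>)"
      using trb[of C] by (simp add: tr_swap[of _ C])
    ultimately show "primal_obj N b C G f \<le> B" unfolding primal_obj_def B_def by linarith
  qed
qed

end

definition dotv :: "nat \<Rightarrow> (nat \<Rightarrow> real) \<Rightarrow> (nat \<Rightarrow> real) \<Rightarrow> real" where
  "dotv n v x = (\<Sum>m<n. v m * x m)"

lemma Bf_outer_gen: "Bf n (outer v v) x y = dotv n v x * dotv n v y"
  by (simp add: Bf_def outer_def dotv_def sum_product mult_ac)

lemma slater_alg:
  fixes c mu L Xi Xj :: real
  assumes "mu < c" "c < L" "Xi \<noteq> Xj"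
  shows "c * Xj\<^sup>2 / 2 - c * Xi\<^sup>2 / 2 + (L * (Xi * (c * Xj) - Xj * (c * Xj) + c * Xj * Xi - c * Xj * Xj)
     + (c * Xi * (c * Xi) - c * Xi * (c * Xj) - c * Xj * (c * Xi) + c * Xj * (c * Xj))
     + mu * (Xj * (c * Xi) - Xi * (c * Xi) + c * Xi * Xj - c * Xi * Xi)
     + L * mu * (Xi * Xi - Xi * Xj - Xj * Xi + Xj * Xj)) / (2 * (L - mu)) < 0"
proof -
  have Lm: "L - mu > 0" using assms by simp
  have eq: "c * Xj\<^sup>2 / 2 - c * Xi\<^sup>2 / 2 + (L * (Xi * (c * Xj) - Xj * (c * Xj) + c * Xj * Xi - c * Xj * Xj)
     + (c * Xi * (c * Xi) - c * Xi * (c * Xj) - c * Xj * (c * Xi) + c * Xj * (c * Xj))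
     + mu * (Xj * (c * Xi) - Xi * (c * Xi) + c * Xi * Xj - c * Xi * Xi)
     + L * mu * (Xi * Xi - Xi * Xj - Xj * Xi + Xj * Xj)) / (2 * (L - mu))
     = ((Xi - Xj)\<^sup>2 * ((c - L) * (c - mu))) / (2 * (L - mu))"
    using Lm by (simp add: field_simps power2_eq_square)
  have "(Xi - Xj)\<^sup>2 > 0" using assms by simp
  moreover have "(c - L) * (c - mu) < 0" using assms by (simp add: mult_neg_pos)
  ultimately have "(Xi - Xj)\<^sup>2 * ((c - L) * (c - mu)) < 0" by (simp add: mult_pos_neg)
  thus ?thesis unfolding eq using Lm by (simp add: divide_neg_pos)
qed

lemma sum_swap_helper: "(\<Sum>m\<in>M. A m + (\<Sum>k\<in>K. (c k::real) * B k m)) = (\<Sum>m\<in>M. A m) + (\<Sum>k\<in>K. c k * (\<Sum>m\<in>M. B k m))"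
proof -
  have "(\<Sum>m\<in>M. \<Sum>k\<in>K. c k * B k m) = (\<Sum>k\<in>K. \<Sum>m\<in>M. c k * B k m)" by (rule sum.swap)
  also have "\<dots> = (\<Sum>k\<in>K. c k * (\<Sum>m\<in>M. B k m))" by (rule sum.cong[OF refl]) (simp add: sum_distrib_left)
  finally show ?thesis by (simp add: sum.distrib)
qed

context
  fixes mu L R :: real and N :: nat and h :: "nat \<Rightarrow> nat \<Rightarrow> real"
  assumes muL: "0 \<le> mu" "mu < L"
begin

lemma slater:
  assumes hyp: "\<forall>i. 1 \<le> i \<and> i \<le> N \<longrightarrow> h i (i - 1) \<noteq> 0" and R: "R > 0"
  shows "\<exists>G f. psd (N+2) G \<and>
     (\<forall>i\<in>idx N. \<forall>j\<in>idx N. i \<noteq> j \<longrightarrow> fval f j - fval f i + trace_prod (N+2) G (Amat mu L N h i j) < 0)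
     \<and> trace_prod (N+2) G (ARmat N) < R\<^sup>2"
proof -
  obtain c where c: "mu < c" "c < L" "\<And>i. i \<le> N \<Longrightarrow> poly (Pp h i) c \<noteq> 0"
    "\<And>i j. i \<le> N \<Longrightarrow> j \<le> N \<Longrightarrow> i \<noteq> j \<Longrightarrow> poly (Pp h i) c \<noteq> poly (Pp h j) c"
    using good_c[where N=N and h=h, OF hyp muL(2)] by blast
  define x0 where "x0 = R / 2"
  have x0: "x0 \<noteq> 0" using R by (simp add: x0_def)
  define xs where "xs i = x0 * poly (Pp h i) c" for i
  define xv where "xv i = (case i of None \<Rightarrow> 0 | Some i \<Rightarrow> xs i)" for i
  define v where "v m = (if m \<le> N then c * xs m else if m = N + 1 then x0 else 0)" for m
  define G where "G = outer v v"
  define f where "f m = c * (xs m)\<^sup>2 / 2" for m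
  have xs_rec: "xs i = x0 - (\<Sum>k<i. h i k * (c * xs k))" for i
    unfolding xs_def by (subst Pp_rec) (simp add: poly_sum algebra_simps sum_distrib_left)
  have du: "dotv (N+2) v (uvec i) = c * xv i" if "i \<in> idx N" for i
  proof (cases i)
    case None thus ?thesis by (simp add: dotv_def xv_def)
  next
    case (Some a)
    hence a: "a \<le> N" using that by (auto simp: idx_def)
    have "dotv (N+2) v (uvec i) = (\<Sum>m<N+2. if m = a then v a else 0)"
      unfolding dotv_def by (rule sum.cong) (auto simp: Some uvec_def)
    thus ?thesis using a by (simp add: Some xv_def v_def)
  qed
  have dh: "dotv (N+2) v (hvec N h i) = xv i" if "i \<in> idx N" for i
  proof (cases i)
    case None thus ?thesis by (simp add: dotv_def xv_def)
  next
    case (Some a)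
    hence a: "a \<le> N" using that by (auto simp: idx_def)
    have "dotv (N+2) v (hvec N h i) = (\<Sum>m<N+2. v m * uvec (Some (N+1)) m + (\<Sum>k<a. (- h a k) * (v m * uvec (Some k) m)))"
      unfolding dotv_def Some hvec_decomp[OF a] by (simp add: algebra_simps sum_distrib_left)
    also have "\<dots> = (\<Sum>m<N+2. v m * uvec (Some (N+1)) m) + (\<Sum>k<a. (- h a k) * (\<Sum>m<N+2. v m * uvec (Some k) m))"
      by (rule sum_swap_helper)
    also have "(\<Sum>m<N+2. v m * uvec (Some (N+1)) m) = x0"
    proof -
      have "(\<Sum>m<N+2. v m * uvec (Some (N+1)) m) = (\<Sum>m<N+2. if m = N+1 then x0 else 0)"
        by (rule sum.cong) (auto simp: uvec_def v_def)
      thus ?thesis by simp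
    qed
    also have "(\<Sum>k<a. (- h a k) * (\<Sum>m<N+2. v m * uvec (Some k) m)) = (\<Sum>k<a. (- h a k) * (c * xs k))"
    proof (rule sum.cong[OF refl])
      fix k assume "k \<in> {..<a}"
      hence "Some k \<in> idx N" using a by (auto simp: idx_def)
      from du[OF this] show "(- h a k) * (\<Sum>m<N+2. v m * uvec (Some k) m) = (- h a k) * (c * xs k)"
        by (simp add: dotv_def xv_def)
    qed
    finally show ?thesis using xs_rec[of a] by (simp add: Some xv_def sum_negf)
  qed
  have fv: "fval f i = c * (xv i)\<^sup>2 / 2" for i
    by (cases i) (simp_all add: fval_def f_def xv_def)
  have distinct: "xv i \<noteq> xv j" if "i \<in> idx N" "j \<in> idx N" "i \<noteq> j" for i j
  proof (cases i; cases j)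
    fix a b assume ab: "i = Some a" "j = Some b"
    hence "a \<le> N" "b \<le> N" "a \<noteq> b" using that by (auto simp: idx_def)
    thus ?thesis using c(4) x0 by (simp add: ab xv_def xs_def)
  next
    fix a assume ab: "i = Some a" "j = None"
    hence "a \<le> N" using that by (auto simp: idx_def)
    thus ?thesis using c(3) x0 by (simp add: ab xv_def xs_def)
  next
    fix a assume ab: "i = None" "j = Some a"
    hence "a \<le> N" using that by (auto simp: idx_def)
    thus ?thesis using c(3) x0 by (simp add: ab xv_def xs_def)
  qed (use that in auto)
  show ?thesis
  proof (intro exI conjI ballI impI)
    show "psd (N+2) G" unfolding G_def by (rule psd_outer)
    fix i j assume ij: "i \<in> idx N" "j \<in> idx N" "i \<noteq> j"
    show "fval f j - fval f i + trace_prod (N+2) G (Amat mu L N h i j) < 0"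
      unfolding tr_Amat Let_def G_def Bf_outer_gen fv du[OF ij(1)] du[OF ij(2)] dh[OF ij(1)] dh[OF ij(2)]
      using slater_alg[OF c(1) c(2) distinct[OF ij]] by (simp add: algebra_simps)
  next
    have "trace_prod (N+2) G (ARmat N) = x0 * x0"
      unfolding G_def tr_AR by (simp add: outer_def v_def)
    also have "\<dots> < R\<^sup>2" using R by (simp add: x0_def power2_eq_square)
    finally show "trace_prod (N+2) G (ARmat N) < R\<^sup>2" .
  qed
qed

end

lemma psd_zero: "psd n (\<lambda>k l. 0)"
  by (simp add: psd_def sym_mat_def)

lemma Bf_mat_add: "Bf n (\<lambda>k l. A k l + B k l) x y = Bf n A x y + Bf n B x y"
  by (simp add: Bf_def algebra_simps sum.distrib)
lemma Bf_mat_cmult: "Bf n (\<lambda>k l. c * A k l) x y = c * Bf n A x y"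
  by (simp add: Bf_def algebra_simps sum_distrib_left)

lemma psd_mix:
  assumes "psd n G" "psd n G'" "0 \<le> t" "t \<le> 1"
  shows "psd n (\<lambda>k l. t * G k l + (1 - t) * G' k l)"
proof -
  have "Bf n (\<lambda>k l. t * G k l + (1 - t) * G' k l) x x = t * Bf n G x x + (1 - t) * Bf n G' x x" for x
    by (simp only: Bf_mat_add Bf_mat_cmult)
  moreover have "0 \<le> t * Bf n G x x + (1 - t) * Bf n G' x x" for x
    using psd_Bf[OF assms(1), of x] psd_Bf[OF assms(2), of x] assms(3,4) by simp
  ultimately show ?thesis using assms(1,2) unfolding psd_def sym_mat_def Bf_def by simp
qed

lemma tr_mix1: "trace_prod n (\<lambda>k l. t * G k l + (1 - t) * G' k l) P = t * trace_prod n G P + (1 - t) * trace_prod n G' P"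
  by (simp only: tr_add1 tr_cmult1)

lemma Amat_diag: "Amat mu L N h i i = (\<lambda>k l. 0)"
  by (simp add: Amat_def outer_def Let_def)

lemma Amat_sym: "Amat mu L N h i j k l = Amat mu L N h i j l k"
  by (simp add: Amat_def outer_def Let_def algebra_simps)

lemma lam_f_sum:
  fixes lam :: "nat option \<Rightarrow> nat option \<Rightarrow> real"
  shows "(\<Sum>m\<le>N. (\<Sum>i\<in>idx N. \<Sum>j\<in>idx N. lam i j * (vvec j m - vvec i m)) * f m)
     = (\<Sum>i\<in>idx N. \<Sum>j\<in>idx N. lam i j * (fval f j - fval f i))"
proof -
  have "(\<Sum>m\<le>N. (\<Sum>i\<in>idx N. \<Sum>j\<in>idx N. lam i j * (vvec j m - vvec i m)) * f m)
      = (\<Sum>m\<le>N. \<Sum>i\<in>idx N. \<Sum>j\<in>idx N. lam i j * (vvec j m * f m - vvec i m * f m))"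
    by (intro sum.cong refl) (simp add: sum_distrib_left sum_distrib_right sum_subtractf algebra_simps)
  also have "\<dots> = (\<Sum>i\<in>idx N. \<Sum>j\<in>idx N. lam i j * ((\<Sum>m\<le>N. vvec j m * f m) - (\<Sum>m\<le>N. vvec i m * f m)))"
    by (subst sum.swap, rule sum.cong[OF refl], subst sum.swap, intro sum.cong refl)
       (simp add: sum_distrib_left sum_subtractf right_diff_distrib)
  also have "\<dots> = (\<Sum>i\<in>idx N. \<Sum>j\<in>idx N. lam i j * (fval f j - fval f i))"
    by (intro sum.cong refl) (simp add: fval_sum)
  finally show ?thesis .
qed

lemma finite_idx: "finite (idx N)" by (simp add: idx_def)

theorem theorem6:
  fixes mu L R :: real and N :: nat and h :: "nat \<Rightarrow> nat \<Rightarrow> real"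
    and b :: "nat \<Rightarrow> real" and C :: "nat \<Rightarrow> nat \<Rightarrow> real"
  assumes "0 \<le> mu" and "mu < L" and "N \<ge> 1" and "R > 0"
    and "\<forall>i k. 1 \<le> i \<and> i \<le> N \<and> i \<le> k \<and> k \<le> N - 1 \<longrightarrow> h i k = 0"
    and "\<forall>i. 1 \<le> i \<and> i \<le> N \<longrightarrow> h i (i - 1) \<noteq> 0"
    and "sym_mat (N + 2) C"
  shows "\<exists>lam tau. dual_feasible mu L N h b C lam tau
           \<and> (\<forall>lam' tau'. dual_feasible mu L N h b C lam' tau' \<longrightarrow> tau * R\<^sup>2 \<le> tau' * R\<^sup>2)
           \<and> ereal (tau * R\<^sup>2) = w_sdp mu L R h N b C"
proof -
  note muL = assms(1,2)
  define A where "A = {(G, f). primal_feasible mu L R N h G f}"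
  define \<phi> where "\<phi> q = primal_obj N b C (fst q) (snd q)" for q
  obtain Bd where Bd: "\<And>G f. primal_feasible mu L R N h G f \<Longrightarrow> primal_obj N b C G f \<le> Bd"
    using primal_bounded[OF muL, of R N h b C] by blast
  have zfeas: "primal_feasible mu L R N h (\<lambda>k l. 0) (\<lambda>m. 0)"
    unfolding primal_feasible_def using assms(4)
    by (simp add: psd_zero trace_prod_def fval_def split: option.splits)
  have Ane: "A \<noteq> {}" using zfeas by (auto simp: A_def)
  have bdd: "bdd_above (\<phi> ` A)"
    by (rule bdd_aboveI[where M=Bd]) (auto simp: A_def \<phi>_def Bd)
  define p where "p = (SUP q\<in>A. \<phi> q)"
  have p_upper: "primal_obj N b C G f \<le> p" if "primal_feasible mu L R N h G f" for G f
  proof -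
    have "(G, f) \<in> A" using that by (simp add: A_def)
    from cSUP_upper[OF this bdd] show ?thesis by (simp add: p_def \<phi>_def)
  qed
  have p_least: "p \<le> tau' * R\<^sup>2" if "dual_feasible mu L N h b C lam' tau'" for lam' tau'
    unfolding p_def
    by (rule cSUP_least[OF Ane]) (auto simp: A_def \<phi>_def intro: weak_duality[OF that])
  have wsdp: "w_sdp mu L R h N b C = ereal p"
  proof -
    have w: "w_sdp mu L R h N b C = (SUP q\<in>A. ereal (\<phi> q))"
      by (simp add: w_sdp_def A_def \<phi>_def)
    have "(SUP q\<in>A. ereal (\<phi> q)) \<le> ereal Bd"
      by (rule SUP_least) (auto simp: A_def \<phi>_def Bd)
    moreover have "ereal (\<phi> ((\<lambda>k l. 0), (\<lambda>m. 0))) \<le> (SUP q\<in>A. ereal (\<phi> q))"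
      by (rule SUP_upper) (simp add: A_def zfeas)
    ultimately have "\<bar>SUP q\<in>A. ereal (\<phi> q)\<bar> \<noteq> \<infinity>" by auto
    from ereal_SUP[OF this] show ?thesis unfolding w p_def by simp
  qed
  define X :: "((nat \<Rightarrow> nat \<Rightarrow> real) \<times> (nat \<Rightarrow> real)) set" where "X = {q. psd (N+2) (fst q)}"
  define mix :: "real \<Rightarrow> (nat \<Rightarrow> nat \<Rightarrow> real) \<times> (nat \<Rightarrow> real) \<Rightarrow> (nat \<Rightarrow> nat \<Rightarrow> real) \<times> (nat \<Rightarrow> real) \<Rightarrow> (nat \<Rightarrow> nat \<Rightarrow> real) \<times> (nat \<Rightarrow> real)"
    where "mix t q q' = ((\<lambda>k l. t * fst q k l + (1 - t) * fst q' k l), (\<lambda>m. t * snd q m + (1 - t) * snd q' m))" for t q q'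
  define P where "P = {ij \<in> idx N \<times> idx N. fst ij \<noteq> snd ij}"
  define K where "K = insert None (Some ` P)"
  define gc where "gc k q = (case k of None \<Rightarrow> trace_prod (N+2) (fst q) (ARmat N) - R\<^sup>2
     | Some ij \<Rightarrow> fval (snd q) (snd ij) - fval (snd q) (fst ij) + trace_prod (N+2) (fst q) (Amat mu L N h (fst ij) (snd ij)))" for k q
  have finP: "finite P"
  proof (rule finite_subset[of _ "idx N \<times> idx N"])
    show "P \<subseteq> idx N \<times> idx N" unfolding P_def by blast
    show "finite (idx N \<times> idx N)" using finite_idx[of N] by blast
  qed
  have finK: "finite K" using finP by (simp add: K_def)
  have mc: "mix_closed X mix"
    unfolding mix_closed_def
  proof (intro ballI allI impI)
    fix q q' and t :: real assume qq: "q \<in> X" "q' \<in> X" and t: "0 \<le> t \<and> t \<le> 1"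
    have "psd (N+2) (\<lambda>k l. t * fst q k l + (1 - t) * fst q' k l)"
      using qq t unfolding X_def by (intro psd_mix) auto
    thus "mix t q q' \<in> X" unfolding X_def mix_def by simp
  qed
  have fval_mix: "fval (\<lambda>m. t * f m + (1 - t) * f' m) i = t * fval f i + (1 - t) * fval f' i" for t f f' i
    by (cases i) (simp_all add: fval_def)
  have aF: "affine_on X mix \<phi>"
    unfolding affine_on_def
  proof (intro ballI allI impI)
    fix q q' :: "(nat \<Rightarrow> nat \<Rightarrow> real) \<times> (nat \<Rightarrow> real)" and t :: real
    have 1: "trace_prod (N+2) C (\<lambda>k l. t * fst q k l + (1 - t) * fst q' k l) = t * trace_prod (N+2) C (fst q) + (1 - t) * trace_prod (N+2) C (fst q')"
      by (simp only: tr_add tr_cmult)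
    have "(\<Sum>m\<le>N. b m * (t * snd q m + (1 - t) * snd q' m)) = (\<Sum>m\<le>N. t * (b m * snd q m) + (1 - t) * (b m * snd q' m))"
      by (rule sum.cong) (simp_all add: algebra_simps)
    also have "\<dots> = t * (\<Sum>m\<le>N. b m * snd q m) + (1 - t) * (\<Sum>m\<le>N. b m * snd q' m)"
      by (simp only: sum.distrib sum_distrib_left)
    finally have 2: "(\<Sum>m\<le>N. b m * (t * snd q m + (1 - t) * snd q' m)) = t * (\<Sum>m\<le>N. b m * snd q m) + (1 - t) * (\<Sum>m\<le>N. b m * snd q' m)" .
    show "\<phi> (mix t q q') = t * \<phi> q + (1 - t) * \<phi> q'"
      unfolding \<phi>_def primal_obj_def mix_def fst_conv snd_conv 1 2 by (simp add: algebra_simps)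
  qed
  have ag: "\<forall>k\<in>K. affine_on X mix (gc k)"
  proof
    fix k assume "k \<in> K"
    show "affine_on X mix (gc k)"
      unfolding affine_on_def
    proof (intro ballI allI impI)
      fix q q' :: "(nat \<Rightarrow> nat \<Rightarrow> real) \<times> (nat \<Rightarrow> real)" and t :: real
      show "gc k (mix t q q') = t * gc k q + (1 - t) * gc k q'"
      proof (cases k)
        case None thus ?thesis unfolding gc_def mix_def fst_conv snd_conv by (simp only: tr_mix1 option.case) (simp add: algebra_simps)
      next
        case (Some ij) thus ?thesis unfolding gc_def mix_def fst_conv snd_conv by (simp only: tr_mix1 fval_mix option.case) (simp add: algebra_simps)
      qed
    qed
  qed
  obtain G0 f0 where G0: "psd (N+2) G0"
    and s1: "\<And>i j. i \<in> idx N \<Longrightarrow> j \<in> idx N \<Longrightarrow> i \<noteq> j \<Longrightarrow> fval f0 j - fval f0 i + trace_prod (N+2) G0 (Amat mu L N h i j) < 0"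
    and s2: "trace_prod (N+2) G0 (ARmat N) < R\<^sup>2"
    using slater[where N=N and h=h and R=R, OF muL assms(6) assms(4)] by blast
  have x0X: "(G0, f0) \<in> X" using G0 by (simp add: X_def)
  have x0g: "\<forall>k\<in>K. gc k (G0, f0) < 0"
    using s1 s2 by (auto simp: K_def P_def gc_def)
  have feas_of: "primal_feasible mu L R N h (fst q) (snd q)" if "q \<in> X" "\<forall>k\<in>K. gc k q \<le> 0" for q
    unfolding primal_feasible_def
  proof (intro conjI ballI)
    show "psd (N + 2) (fst q)" using that by (simp add: X_def)
    fix i j assume ij: "i \<in> idx N" "j \<in> idx N"
    show "fval (snd q) j - fval (snd q) i + trace_prod (N + 2) (fst q) (Amat mu L N h i j) \<le> 0"
    proof (cases "i = j")
      case True thus ?thesis by (simp add: Amat_diag trace_prod_def)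
    next
      case False
      hence "Some (i, j) \<in> K" using ij by (auto simp: K_def P_def)
      thus ?thesis using that(2) by (force simp: gc_def)
    qed
  next
    have "None \<in> K" by (simp add: K_def)
    thus "trace_prod (N + 2) (fst q) (ARmat N) \<le> R\<^sup>2" using that(2) by (force simp: gc_def)
  qed
  have bound: "\<forall>q\<in>X. (\<forall>k\<in>K. gc k q \<le> 0) \<longrightarrow> \<phi> q \<le> p"
    using feas_of p_upper by (auto simp: \<phi>_def)
  obtain l where l0: "\<forall>k\<in>K. 0 \<le> l k" and lag: "\<forall>q\<in>X. \<phi> q - (\<Sum>k\<in>K. l k * gc k q) \<le> p"
    using lagr_fin[OF finK mc aF ag x0X x0g bound] by blast
  define lam where "lam i j = (if i \<noteq> j then l (Some (i, j)) else 0)" for i j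
  define tau where "tau = l None"
  have sumK: "(\<Sum>k\<in>K. l k * gc k q) = tau * gc None q + (\<Sum>i\<in>idx N. \<Sum>j\<in>idx N. lam i j * gc (Some (i, j)) q)" for q
  proof -
    have "None \<notin> Some ` P" by auto
    hence "(\<Sum>k\<in>K. l k * gc k q) = l None * gc None q + (\<Sum>k\<in>Some ` P. l k * gc k q)"
      unfolding K_def using finP by simp
    also have "(\<Sum>k\<in>Some ` P. l k * gc k q) = (\<Sum>ij\<in>P. l (Some ij) * gc (Some ij) q)"
      by (subst sum.reindex) auto
    also have "\<dots> = (\<Sum>ij\<in>P. lam (fst ij) (snd ij) * gc (Some ij) q)"
      by (rule sum.cong) (auto simp: P_def lam_def)
    also have "\<dots> = (\<Sum>ij\<in>idx N \<times> idx N. lam (fst ij) (snd ij) * gc (Some ij) q)"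
      by (rule sum.mono_neutral_left) (auto simp: P_def lam_def finite_idx)
    also have "\<dots> = (\<Sum>i\<in>idx N. \<Sum>j\<in>idx N. lam i j * gc (Some (i, j)) q)"
      by (simp add: sum.cartesian_product split_def)
    finally show ?thesis by (simp add: tau_def)
  qed
  define bb where "bb m = (\<Sum>i\<in>idx N. \<Sum>j\<in>idx N. lam i j * (vvec j m - vvec i m))" for m
  define S where "S = (\<lambda>k l. tau * ARmat N k l - C k l + (\<Sum>i\<in>idx N. \<Sum>j\<in>idx N. lam i j * Amat mu L N h i j k l))"
  have KI: "(\<Sum>m\<le>N. (b m - bb m) * f m) - trace_prod (N+2) S G + tau * R\<^sup>2 \<le> p" if "psd (N+2) G" for G f
  proof -
    have "(G, f) \<in> X" using that by (simp add: X_def)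
    hence le: "\<phi> (G, f) - (\<Sum>k\<in>K. l k * gc k (G, f)) \<le> p" using lag by blast
    have split: "(\<Sum>i\<in>idx N. \<Sum>j\<in>idx N. lam i j * gc (Some (i, j)) (G, f))
      = (\<Sum>i\<in>idx N. \<Sum>j\<in>idx N. lam i j * (fval f j - fval f i)) + (\<Sum>i\<in>idx N. \<Sum>j\<in>idx N. lam i j * trace_prod (N + 2) G (Amat mu L N h i j))"
      by (simp add: gc_def sum.distrib[symmetric] distrib_left)
    have e1: "(\<Sum>m\<le>N. (b m - bb m) * f m) = (\<Sum>m\<le>N. b m * f m) - (\<Sum>i\<in>idx N. \<Sum>j\<in>idx N. lam i j * (fval f j - fval f i))"
      unfolding lam_f_sum[symmetric] bb_def by (simp add: left_diff_distrib sum_subtractf)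
    have "\<phi> (G, f) - (\<Sum>k\<in>K. l k * gc k (G, f)) = (\<Sum>m\<le>N. (b m - bb m) * f m) - trace_prod (N+2) S G + tau * R\<^sup>2"
      unfolding sumK split e1 S_def dual_trace \<phi>_def primal_obj_def by (simp add: gc_def algebra_simps)
    thus ?thesis using le by simp
  qed
  have tauR: "tau * R\<^sup>2 \<le> p" using KI[OF psd_zero, of "\<lambda>m. 0"] by (simp add: trace_prod_def)
  have beq: "b m - bb m = 0" if m: "m \<le> N" for m
  proof (rule ccontr)
    assume ne: "b m - bb m \<noteq> 0"
    define t where "t = (p - tau * R\<^sup>2 + 1) / (b m - bb m)"
    define f where "f k = (if k = m then t else 0)" for k
    have "(\<Sum>k\<le>N. (b k - bb k) * f k) = (b m - bb m) * t"
    proof -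
      have "(\<Sum>k\<le>N. (b k - bb k) * f k) = (\<Sum>k\<le>N. if k = m then (b m - bb m) * t else 0)"
        by (rule sum.cong) (auto simp: f_def)
      thus ?thesis using m by simp
    qed
    also have "\<dots> = p - tau * R\<^sup>2 + 1" using ne by (simp add: t_def)
    finally show False using KI[OF psd_zero, of f] by (simp add: trace_prod_def)
  qed
  have psdS: "psd (N+2) S"
    unfolding psd_def
  proof
    show "sym_mat (N + 2) S"
      using assms(7) unfolding sym_mat_def S_def ARmat_def
      by (auto simp: Amat_sym[of mu L N h _ _ _ ] intro!: sum.cong)
    show "\<forall>x. 0 \<le> (\<Sum>i<N + 2. \<Sum>j<N + 2. x i * S i j * x j)"
    proof
      fix x
      show "0 \<le> (\<Sum>i<N + 2. \<Sum>j<N + 2. x i * S i j * x j)"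
      proof (rule ccontr)
        assume "\<not> ?thesis"
        hence neg: "Bf (N+2) S x x < 0" by (simp add: Bf_def)
        define s where "s = (p - tau * R\<^sup>2 + 1) / (- Bf (N+2) S x x)"
        have s0: "0 \<le> s" using neg tauR unfolding s_def by (intro divide_nonneg_pos) auto
        have psdG: "psd (N+2) (\<lambda>k l. s * outer x x k l)"
        proof -
          have "Bf (N+2) (\<lambda>k l. s * outer x x k l) y y = s * Bf (N+2) (outer x x) y y" for y
            by (simp add: Bf_def sum_distrib_left algebra_simps)
          thus ?thesis using psd_outer[of "N+2" x] s0 unfolding psd_def sym_mat_def Bf_def
            by (simp add: outer_def mult.commute)
        qed
        have "trace_prod (N+2) S (\<lambda>k l. s * outer x x k l) = s * Bf (N+2) S x x"
          by (simp only: tr_cmult tr_outer)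
        also have "\<dots> = - (p - tau * R\<^sup>2 + 1)" using neg by (simp add: s_def)
        finally have "trace_prod (N+2) S (\<lambda>k l. s * outer x x k l) = - (p - tau * R\<^sup>2 + 1)" .
        thus False using KI[OF psdG, of "\<lambda>m. 0"] by simp
      qed
    qed
  qed
  have df: "dual_feasible mu L N h b C lam tau"
    unfolding dual_feasible_def
  proof (intro conjI allI impI ballI)
    show "psd (N + 2) (\<lambda>k l. tau * ARmat N k l - C k l + (\<Sum>i\<in>idx N. \<Sum>j\<in>idx N. lam i j * Amat mu L N h i j k l))"
      using psdS by (simp add: S_def)
    fix m assume "m \<le> N"
    thus "b m - (\<Sum>i\<in>idx N. \<Sum>j\<in>idx N. lam i j * (vvec j m - vvec i m)) = 0" using beq by (simp add: bb_def)
  next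
    fix i j assume "i \<in> idx N" "j \<in> idx N"
    thus "0 \<le> lam i j" using l0 by (auto simp: lam_def K_def P_def)
  next
    show "0 \<le> tau" using l0 by (simp add: tau_def K_def)
  qed
  have eq: "tau * R\<^sup>2 = p" using tauR p_least[OF df] by simp
  show ?thesis
  proof (intro exI conjI allI impI)
    show "dual_feasible mu L N h b C lam tau" by (rule df)
    fix lam' tau' assume "dual_feasible mu L N h b C lam' tau'"
    thus "tau * R\<^sup>2 \<le> tau' * R\<^sup>2" using p_least eq by simp
  next
    show "ereal (tau * R\<^sup>2) = w_sdp mu L R h N b C" using eq wsdp by simp
  qed
qed

end
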